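(* There is $n_0$ such that for all even $n\ge n_0$ and all integers $d\ge n/2$, every $d$-regular graph $G$ on $n$ vertices satisfies $$M(G)\le\Big(\big(1+n^{-1/2}\big)\frac{d}{e^2}\Big)^{dn/2},$$ where $M(G)$ denotes the number of 1-factorizations of $G$.
   Context: A 1-factorization of a $d$-regular graph $G$ is an ordered $d$-tuple of pairwise edge-disjoint perfect matchings of $G$ whose union is $E(G)$ (equivalently, a proper edge-colouring of $G$ with colour set $[d]$). $e$ denotes Euler's number. *)

theory Defs
  imports Complex_Main "HOL-Library.FuncSet"
begin

definition simple_graph :: "'a set \<Rightarrow> 'a set set \<Rightarrow> bool" where
  "simple_graph V E \<longleftrightarrow> finite V \<and>
     (\<forall>e\<in>E. \<exists>u v. u \<in> V \<and> v \<in> V \<and> u \<noteq> v \<and> e = {u, v})"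

definition regular_graph :: "'a set \<Rightarrow> 'a set set \<Rightarrow> nat \<Rightarrow> bool" where
  "regular_graph V E d \<longleftrightarrow> simple_graph V E \<and> (\<forall>v\<in>V. card {e\<in>E. v \<in> e} = d)"

definition perfect_matching :: "'a set \<Rightarrow> 'a set set \<Rightarrow> 'a set set \<Rightarrow> bool" where
  "perfect_matching V E M \<longleftrightarrow> M \<subseteq> E \<and> (\<forall>v\<in>V. \<exists>!e. e \<in> M \<and> v \<in> e)"

text \<open>1-factorizations of a d-regular graph: ordered d-tuples (indexed by {0..<d})
  of pairwise edge-disjoint perfect matchings whose union is E.\<close>
definition one_factorizations :: "'a set \<Rightarrow> 'a set set \<Rightarrow> nat \<Rightarrow> (nat \<Rightarrow> 'a set set) set" where
  "one_factorizations V E d =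
     {F \<in> {..<d} \<rightarrow>\<^sub>E Pow E.
        (\<forall>i<d. perfect_matching V E (F i)) \<and>
        (\<forall>i<d. \<forall>j<d. i \<noteq> j \<longrightarrow> F i \<inter> F j = {}) \<and>
        (\<Union>i<d. F i) = E}"

definition num_one_factorizations :: "'a set \<Rightarrow> 'a set set \<Rightarrow> nat \<Rightarrow> nat" where
  "num_one_factorizations V E d = card (one_factorizations V E d)"

end

theory Submission
  imports Defs "HOL-Real_Asymp.Real_Asymp"
begin

definition Tset :: "nat set \<Rightarrow> (nat \<Rightarrow> nat set) \<Rightarrow> nat set \<Rightarrow> (nat \<Rightarrow> nat) set" where
  "Tset R N U = {\<sigma> \<in> R \<rightarrow>\<^sub>E UNIV. inj_on \<sigma> R \<and> (\<forall>i\<in>R. \<sigma> i \<in> N i - U)}"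

definition wt :: "nat set \<Rightarrow> (nat \<Rightarrow> nat set) \<Rightarrow> nat set \<Rightarrow> (nat \<Rightarrow> nat) \<Rightarrow> (nat \<Rightarrow> nat) \<Rightarrow> real" where
  "wt R N U p \<sigma> = (\<Prod>i\<in>R. 1 / real (card (N i - U - \<sigma> ` {i'\<in>R. p i' < p i})))"

lemma Tset_finite: "finite R \<Longrightarrow> (\<And>i. finite (N i)) \<Longrightarrow> finite (Tset R N U)"
  by (rule finite_subset[OF _ finite_PiE[of R N]]) (auto simp: Tset_def)

lemma greedy:
  assumes "finite R" "inj_on p R" "\<And>i. finite (N i)"
  shows "(\<Sum>\<sigma>\<in>Tset R N U. wt R N U p \<sigma>) \<le> 1"
  using assms
proof (induction "card R" arbitrary: R U rule: less_induct)
  case less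
  show ?case
  proof (cases "R = {}")
    case True
    then show ?thesis by (simp add: Tset_def wt_def)
  next
    case False
    obtain x where x: "x \<in> R" "p x = Min (p ` R)"
      using False less.prems(1) Min_in[of "p ` R"] by fastforce
    have xmin: "\<And>i. i \<in> R \<Longrightarrow> i \<noteq> x \<Longrightarrow> p x < p i"
      using x less.prems(1,2) by (metis Min_le finite_imageI image_eqI inj_on_def order_le_neq_trans)
    define R' where "R' = R - {x}"
    have cR': "card R' < card R" unfolding R'_def using x less.prems(1) by (rule_tac card_Diff1_less) auto
    have fR': "finite R'" using less.prems(1) R'_def by simp
    have iR': "inj_on p R'" using less.prems(2) R'_def by (auto intro: inj_on_subset)
    have IH: "\<And>U'. (\<Sum>\<sigma>\<in>Tset R' N U'. wt R' N U' p \<sigma>) \<le> 1"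
      using less.hyps[OF cR' fR' iR' less.prems(3)] by blast
    define Cs where "Cs = N x - U"
    have eq: "(\<Sum>\<sigma>\<in>Tset R N U. wt R N U p \<sigma>) =
       (\<Sum>q\<in>Sigma Cs (\<lambda>c. Tset R' N (insert c U)). (1 / real (card Cs)) * wt R' N (insert (fst q) U) p (snd q))"
    proof (rule sum.reindex_bij_witness[where j = "\<lambda>\<sigma>. (\<sigma> x, restrict \<sigma> R')" and i = "\<lambda>q. (snd q)(x := fst q)"])
      fix \<sigma> assume s: "\<sigma> \<in> Tset R N U"
      show "(snd (\<sigma> x, restrict \<sigma> R'))(x := fst (\<sigma> x, restrict \<sigma> R')) = \<sigma>"
        using s x unfolding Tset_def R'_def by (auto simp: PiE_def extensional_def fun_eq_iff)
      show "(\<sigma> x, restrict \<sigma> R') \<in> Sigma Cs (\<lambda>c. Tset R' N (insert c U))"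
        using s x unfolding Tset_def R'_def Cs_def
        by (auto simp: inj_on_def intro: inj_on_subset)
      have img: "\<And>i. i \<in> R' \<Longrightarrow> \<sigma> ` {i' \<in> R. p i' < p i} = insert (\<sigma> x) (restrict \<sigma> R' ` {i' \<in> R'. p i' < p i})"
        using xmin x unfolding R'_def by auto
      have "wt R N U p \<sigma> = (1 / real (card (N x - U - \<sigma> ` {i'\<in>R. p i' < p x}))) *
             (\<Prod>i\<in>R'. 1 / real (card (N i - U - \<sigma> ` {i'\<in>R. p i' < p i})))"
        unfolding wt_def R'_def using x less.prems(1) by (simp add: prod.remove)
      also have "{i'\<in>R. p i' < p x} = {}" using xmin
        by (auto dest: less_asym)
      also have "(\<Prod>i\<in>R'. 1 / real (card (N i - U - \<sigma> ` {i'\<in>R. p i' < p i}))) = wt R' N (insert (\<sigma> x) U) p (restrict \<sigma> R')"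
        unfolding wt_def proof (rule prod.cong)
        fix i assume "i \<in> R'"
        then have "N i - U - \<sigma> ` {i'\<in>R. p i' < p i} = N i - insert (\<sigma> x) U - restrict \<sigma> R' ` {i' \<in> R'. p i' < p i}"
          using img by blast
        then show "1 / real (card (N i - U - \<sigma> ` {i'\<in>R. p i' < p i})) = 1 / real (card (N i - insert (\<sigma> x) U - restrict \<sigma> R' ` {i' \<in> R'. p i' < p i}))" by simp
      qed simp
      finally show "1 / real (card Cs) * wt R' N (insert (fst (\<sigma> x, restrict \<sigma> R')) U) p (snd (\<sigma> x, restrict \<sigma> R')) = wt R N U p \<sigma>"
        by (simp add: Cs_def)
    next
      fix q assume q: "q \<in> Sigma Cs (\<lambda>c. Tset R' N (insert c U))"
      obtain c \<tau> where qc: "q = (c, \<tau>)" by (cases q)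
      have c: "c \<in> N x - U" and t: "\<tau> \<in> R' \<rightarrow>\<^sub>E UNIV" "inj_on \<tau> R'" "\<forall>i\<in>R'. \<tau> i \<in> N i - insert c U"
        using q unfolding qc Tset_def Cs_def by auto
      have xR': "x \<notin> R'" unfolding R'_def by simp
      have ext: "\<And>y. y \<notin> R' \<Longrightarrow> \<tau> y = undefined" using t(1) by (simp add: PiE_def extensional_def)
      have "restrict (\<tau>(x := c)) R' = \<tau>"
      proof
        fix y show "restrict (\<tau>(x := c)) R' y = \<tau> y"
          using ext xR' by (cases "y \<in> R'") auto
      qed
      then show "(((snd q)(x := fst q)) x, restrict ((snd q)(x := fst q)) R') = q"
        unfolding qc by simp
      have R: "R = insert x R'" unfolding R'_def using x by blast
      have e1: "\<tau>(x := c) \<in> R \<rightarrow>\<^sub>E UNIV"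
        unfolding PiE_def extensional_def using ext R by auto
      have cn: "c \<notin> \<tau> ` R'" using t(3) by auto
      have e2: "inj_on (\<tau>(x := c)) R"
        unfolding R using t(2) cn xR' by (auto simp: inj_on_def)
      have e3: "\<forall>i\<in>R. (\<tau>(x := c)) i \<in> N i - U"
        unfolding R using c t(3) by auto
      show "(snd q)(x := fst q) \<in> Tset R N U"
        unfolding qc Tset_def using e1 e2 e3 by simp
    qed
    also have "\<dots> = (\<Sum>c\<in>Cs. \<Sum>\<tau>\<in>Tset R' N (insert c U). (1 / real (card Cs)) * wt R' N (insert c U) p \<tau>)"
      using sum.Sigma[of Cs "\<lambda>c. Tset R' N (insert c U)" "\<lambda>c \<tau>. (1 / real (card Cs)) * wt R' N (insert c U) p \<tau>"]
      by (simp add: split_def Cs_def less.prems(3) Tset_finite fR')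
    also have "\<dots> = (\<Sum>c\<in>Cs. (1 / real (card Cs)) * (\<Sum>\<tau>\<in>Tset R' N (insert c U). wt R' N (insert c U) p \<tau>))"
      by (simp add: sum_distrib_left)
    also have "\<dots> \<le> (\<Sum>c\<in>Cs. (1 / real (card Cs)) * 1)"
      by (rule sum_mono, rule mult_left_mono) (auto simp: IH)
    also have "\<dots> \<le> 1" by (cases "Cs = {}") (auto simp: Cs_def less.prems(3))
    finally show ?thesis .
  qed
qed

definition rk :: "(nat \<Rightarrow> nat) \<Rightarrow> nat set \<Rightarrow> nat \<Rightarrow> nat" where
  "rk p B x = card {b\<in>B. \<not> p b < p x}"

lemma rank_sum:
  assumes "finite B" "inj_on p B"
  shows "(\<Sum>x\<in>B. ln (real (rk p B x))) = ln (fact (card B))"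
proof -
  have inj: "inj_on (rk p B) B"
  proof (rule inj_onI)
    fix x y assume xy: "x \<in> B" "y \<in> B" "rk p B x = rk p B y"
    show "x = y"
    proof (rule ccontr)
      assume "x \<noteq> y"
      then have "p x \<noteq> p y" using assms(2) xy by (auto simp: inj_on_def)
      then consider "p x < p y" | "p y < p x" by linarith
      then show False
      proof cases
        case 1
        have "{b\<in>B. \<not> p b < p y} \<subset> {b\<in>B. \<not> p b < p x}" using 1 xy by auto
        then have "rk p B y < rk p B x" unfolding rk_def using assms(1) by (simp add: psubset_card_mono)
        then show False using xy by simp
      next
        case 2
        have "{b\<in>B. \<not> p b < p x} \<subset> {b\<in>B. \<not> p b < p y}" using 2 xy by auto
        then have "rk p B x < rk p B y" unfolding rk_def using assms(1) by (simp add: psubset_card_mono)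
        then show False using xy by simp
      qed
    qed
  qed
  have sub: "rk p B ` B \<subseteq> {1..card B}"
  proof
    fix y assume "y \<in> rk p B ` B"
    then obtain x where x: "x \<in> B" "y = rk p B x" by auto
    have "x \<in> {b\<in>B. \<not> p b < p x}" using x by simp
    then have "1 \<le> rk p B x" unfolding rk_def using assms(1)
      by (metis (no_types, lifting) One_nat_def Suc_leI card_gt_0_iff empty_iff finite_subset mem_Collect_eq subsetI)
    moreover have "rk p B x \<le> card B" unfolding rk_def using assms(1) by (intro card_mono) auto
    ultimately show "y \<in> {1..card B}" using x by simp
  qed
  have eq: "rk p B ` B = {1..card B}"
    using sub inj by (metis card_atLeastAtMost card_image card_subset_eq diff_Suc_1 finite_atLeastAtMost)
  have "(\<Sum>x\<in>B. ln (real (rk p B x))) = (\<Sum>j\<in>{1..card B}. ln (real j))"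
    using sum.reindex[OF inj, of "\<lambda>j. ln (real j)"] eq by simp
  also have "\<dots> = ln (\<Prod>j\<in>{1..card B}. real j)"
    by (subst ln_prod) auto
  also have "(\<Prod>j\<in>{1..card B}. real j) = fact (card B)"
    by (simp add: fact_prod)
  finally show ?thesis .
qed

definition sw :: "nat \<Rightarrow> nat \<Rightarrow> nat \<Rightarrow> nat" where
  "sw a b x = (if x = a then b else if x = b then a else x)"

lemma sw_sw[simp]: "sw a b (sw a b x) = x" by (simp add: sw_def)

definition Ps :: "nat set \<Rightarrow> (nat \<Rightarrow> nat) set" where
  "Ps V = {p \<in> V \<rightarrow>\<^sub>E {..<card V}. inj_on p V}"

lemma Ps_finite: "finite V \<Longrightarrow> finite (Ps V)"
  unfolding Ps_def by (rule finite_subset[OF _ finite_PiE[of V "\<lambda>_. {..<card V}"]]) auto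

lemma Ps_nonempty: "finite V \<Longrightarrow> Ps V \<noteq> {}"
proof -
  assume fV: "finite V"
  obtain h where h: "bij_betw h {0..<card V} V" using ex_bij_betw_nat_finite[OF fV] by blast
  define p where "p = restrict (inv_into {0..<card V} h) V"
  have "bij_betw (inv_into {0..<card V} h) V {0..<card V}" using h by (rule bij_betw_inv_into)
  then have "p \<in> Ps V" unfolding Ps_def p_def bij_betw_def by (auto simp: inj_on_def)
  then show ?thesis by auto
qed

lemma sym_swap:
  assumes fV: "finite V" and B: "B \<subseteq> V" and i: "i \<in> B" and b: "b \<in> B"
  shows "(\<Sum>p\<in>Ps V. f (rk p B i)) = (\<Sum>p\<in>Ps V. f (rk p B b))"
proof (rule sum.reindex_bij_witness[where i = "\<lambda>p. restrict (p \<circ> sw i b) V" and j = "\<lambda>p. restrict (p \<circ> sw i b) V"])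
  have swV: "\<And>x. x \<in> V \<Longrightarrow> sw i b x \<in> V" using i b B by (auto simp: sw_def)
  have swn: "\<And>x. x \<notin> V \<Longrightarrow> sw i b x = x" using i b B by (auto simp: sw_def)
  show inP: "restrict (p \<circ> sw i b) V \<in> Ps V" if "p \<in> Ps V" for p
  proof -
    have "restrict (p \<circ> sw i b) V \<in> V \<rightarrow>\<^sub>E {..<card V}" using that swV unfolding Ps_def by auto
    moreover have "inj_on (restrict (p \<circ> sw i b) V) V"
      using that swV unfolding Ps_def inj_on_def by auto (metis sw_sw)
    ultimately show ?thesis unfolding Ps_def by simp
  qed
  show "restrict (restrict (p \<circ> sw i b) V \<circ> sw i b) V = p" if "p \<in> Ps V" for p
  proof
    fix x show "restrict (restrict (p \<circ> sw i b) V \<circ> sw i b) V x = p x"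
      using that swV unfolding Ps_def by (cases "x \<in> V") (auto simp: PiE_def extensional_def)
  qed
  then show "restrict (restrict (p \<circ> sw i b) V \<circ> sw i b) V = p" if "p \<in> Ps V" for p
    using that .
  show "restrict (p \<circ> sw i b) V \<in> Ps V" if "p \<in> Ps V" for p using inP that .
  show "f (rk (restrict (p \<circ> sw i b) V) B b) = f (rk p B i)" if "p \<in> Ps V" for p
  proof -
    have swi: "sw i b b = i" by (simp add: sw_def)
    have "{c\<in>B. \<not> restrict (p \<circ> sw i b) V c < restrict (p \<circ> sw i b) V b} = sw i b ` {c\<in>B. \<not> p c < p i}"
    proof -
      have "{c\<in>B. \<not> restrict (p \<circ> sw i b) V c < restrict (p \<circ> sw i b) V b} = {c\<in>B. \<not> p (sw i b c) < p i}"
        using B b swi by auto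
      also have "\<dots> = sw i b ` {c\<in>B. \<not> p c < p i}"
      proof
        show "{c \<in> B. \<not> p (sw i b c) < p i} \<subseteq> sw i b ` {c \<in> B. \<not> p c < p i}"
        proof
          fix c assume c: "c \<in> {c \<in> B. \<not> p (sw i b c) < p i}"
          have "sw i b c \<in> B" using c i b by (auto simp: sw_def)
          then show "c \<in> sw i b ` {c \<in> B. \<not> p c < p i}" using c by (auto intro!: image_eqI[where x = "sw i b c"])
        qed
        show "sw i b ` {c \<in> B. \<not> p c < p i} \<subseteq> {c \<in> B. \<not> p (sw i b c) < p i}"
          using i b by (auto simp: sw_def)
      qed
      finally show ?thesis .
    qed
    moreover have "inj (sw i b)" by (metis injI sw_sw)
    ultimately have "rk (restrict (p \<circ> sw i b) V) B b = rk p B i"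
      unfolding rk_def by (simp add: card_image inj_on_subset)
    then show ?thesis by simp
  qed
qed

lemma Lc_ge1:
  fixes p :: "nat \<Rightarrow> nat" and \<sigma> :: "nat \<Rightarrow> nat"
  assumes "inj_on \<sigma> V" "i \<in> V" "\<sigma> i \<in> N i" "finite (N i)"
  shows "1 \<le> card (N i - \<sigma> ` {i'\<in>V. p i' < p i})"
proof -
  have "\<sigma> i \<notin> \<sigma> ` {i'\<in>V. p i' < p i}"
  proof
    assume "\<sigma> i \<in> \<sigma> ` {i'\<in>V. p i' < p i}"
    then obtain x where x: "x \<in> V" "p x < p i" "\<sigma> i = \<sigma> x" by auto
    then have "x = i" using assms(1,2) by (auto simp: inj_on_def)
    then show False using x(2) by simp
  qed
  then have "\<sigma> i \<in> N i - \<sigma> ` {i'\<in>V. p i' < p i}" using assms(3) by simp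
  then show ?thesis using assms(4) by (metis One_nat_def Suc_leI card_gt_0_iff empty_iff finite_Diff)
qed

lemma step3:
  fixes V :: "nat set" and N :: "nat \<Rightarrow> nat set" and p :: "nat \<Rightarrow> nat"
  assumes fV: "finite V" and fN: "\<And>i. finite (N i)"
    and S: "S \<subseteq> {\<sigma> \<in> V \<rightarrow>\<^sub>E V. inj_on \<sigma> V \<and> (\<forall>v\<in>V. \<sigma> v \<in> N v)}" and p: "inj_on p V"
  shows "real (card S) * ln (real (card S)) \<le> (\<Sum>\<sigma>\<in>S. \<Sum>i\<in>V. ln (real (card (N i - \<sigma> ` {i'\<in>V. p i' < p i}))))"
proof (cases "S = {}")
  case True then show ?thesis by simp
next
  case False
  define s where "s = real (card S)"
  have fT: "finite (Tset V N {})" by (rule Tset_finite) (use fV fN in auto)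
  have STs: "S \<subseteq> Tset V N {}" using S unfolding Tset_def by (auto simp: PiE_def Pi_def)
  have fS: "finite S" using finite_subset[OF STs fT] .
  have spos: "s > 0" using False fS s_def by (simp add: card_gt_0_iff)
  define L where "L \<sigma> i = real (card (N i - \<sigma> ` {i'\<in>V. p i' < p i}))" for \<sigma> i
  have L1: "\<And>\<sigma> i. \<sigma> \<in> S \<Longrightarrow> i \<in> V \<Longrightarrow> 1 \<le> L \<sigma> i"
  proof -
    fix \<sigma> i assume a: "\<sigma> \<in> S" "i \<in> V"
    then have "inj_on \<sigma> V" "\<sigma> i \<in> N i" using S by auto
    then have "1 \<le> card (N i - \<sigma> ` {i'\<in>V. p i' < p i})" using Lc_ge1 a(2) fN by blast
    then show "1 \<le> L \<sigma> i" unfolding L_def by simp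
  qed
  have wtL: "wt V N {} p \<sigma> = (\<Prod>i\<in>V. 1 / L \<sigma> i)" for \<sigma> unfolding wt_def L_def by simp
  have wnn: "0 \<le> wt V N {} p \<sigma>" for \<sigma> unfolding wt_def by (simp add: prod_nonneg)
  have sumw: "(\<Sum>\<sigma>\<in>S. wt V N {} p \<sigma>) \<le> 1"
  proof -
    have "(\<Sum>\<sigma>\<in>S. wt V N {} p \<sigma>) \<le> (\<Sum>\<sigma>\<in>Tset V N {}. wt V N {} p \<sigma>)"
      by (rule sum_mono2[OF fT STs]) (simp add: wnn)
    also have "\<dots> \<le> 1" by (rule greedy) (use fV p fN in auto)
    finally show ?thesis .
  qed
  have key: "ln s - (\<Sum>i\<in>V. ln (L \<sigma> i)) \<le> s * wt V N {} p \<sigma> - 1" if \<sigma>: "\<sigma> \<in> S" for \<sigma>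
  proof -
    have pos: "\<And>i. i \<in> V \<Longrightarrow> 0 < L \<sigma> i" using L1[OF \<sigma>] by fastforce
    have "ln (\<Prod>i\<in>V. 1 / L \<sigma> i) = (\<Sum>i\<in>V. ln (1 / L \<sigma> i))"
      by (rule ln_prod) (use pos fV in force)+
    also have "\<dots> = - (\<Sum>i\<in>V. ln (L \<sigma> i))" using pos by (auto simp add: ln_div sum_negf[symmetric] intro!: sum.cong)
    finally have lw: "ln (wt V N {} p \<sigma>) = - (\<Sum>i\<in>V. ln (L \<sigma> i))" by (simp add: wtL)
    have wpos: "0 < wt V N {} p \<sigma>" unfolding wtL using pos by (simp add: prod_pos)
    have "ln (s * wt V N {} p \<sigma>) = ln s + ln (wt V N {} p \<sigma>)" using spos wpos by (simp add: ln_mult)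
    moreover have "ln (s * wt V N {} p \<sigma>) \<le> s * wt V N {} p \<sigma> - 1"
      by (rule ln_le_minus_one) (use spos wpos in simp)
    ultimately show ?thesis using lw by simp
  qed
  have "(\<Sum>\<sigma>\<in>S. ln s - (\<Sum>i\<in>V. ln (L \<sigma> i))) \<le> (\<Sum>\<sigma>\<in>S. s * wt V N {} p \<sigma> - 1)"
    by (rule sum_mono) (rule key)
  also have "\<dots> = s * (\<Sum>\<sigma>\<in>S. wt V N {} p \<sigma>) - s"
    by (simp add: sum_subtractf sum_distrib_left s_def)
  also have "\<dots> \<le> s * 1 - s" using sumw spos by (intro diff_right_mono mult_left_mono) auto
  finally have "s * ln s - (\<Sum>\<sigma>\<in>S. \<Sum>i\<in>V. ln (L \<sigma> i)) \<le> 0"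
    by (simp add: sum_subtractf s_def)
  then show ?thesis unfolding s_def L_def by simp
qed

lemma avg_rank:
  assumes fV: "finite V" and B: "B \<subseteq> V" and i: "i \<in> B"
  shows "(\<Sum>p\<in>Ps V. ln (real (rk p B i))) = real (card (Ps V)) * ln (fact (card B)) / real (card B)"
proof -
  have fB: "finite B" using fV B finite_subset by blast
  have kpos: "card B > 0" using fB i by (auto simp: card_gt_0_iff)
  have "real (card B) * (\<Sum>p\<in>Ps V. ln (real (rk p B i))) = (\<Sum>b\<in>B. \<Sum>p\<in>Ps V. ln (real (rk p B b)))"
  proof -
    have "(\<Sum>b\<in>B. \<Sum>p\<in>Ps V. ln (real (rk p B b))) = (\<Sum>b\<in>B. \<Sum>p\<in>Ps V. ln (real (rk p B i)))"
      by (rule sum.cong[OF refl]) (rule sym_swap[OF fV B i, symmetric])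
    then show ?thesis by simp
  qed
  also have "\<dots> = (\<Sum>p\<in>Ps V. \<Sum>b\<in>B. ln (real (rk p B b)))" by (rule sum.swap)
  also have "\<dots> = (\<Sum>p\<in>Ps V. ln (fact (card B)))"
  proof (rule sum.cong[OF refl])
    fix p assume "p \<in> Ps V"
    then have "inj_on p B" using B unfolding Ps_def by (auto intro: inj_on_subset)
    then show "(\<Sum>b\<in>B. ln (real (rk p B b))) = ln (fact (card B))" by (rule rank_sum[OF fB])
  qed
  also have "\<dots> = real (card (Ps V)) * ln (fact (card B))" by simp
  finally show ?thesis using kpos by (simp add: field_simps)
qed

lemma bregman:
  fixes V :: "nat set" and N :: "nat \<Rightarrow> nat set"
  assumes fV: "finite V" and NV: "\<And>v. v \<in> V \<Longrightarrow> N v \<subseteq> V" and cN: "\<And>v. v \<in> V \<Longrightarrow> card (N v) = k"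
    and fN: "\<And>i. finite (N i)"
  shows "real (card {\<sigma>\<in>V \<rightarrow>\<^sub>E V. bij_betw \<sigma> V V \<and> (\<forall>v\<in>V. \<sigma> v \<in> N v)}) \<le> exp (real (card V) * ln (fact k) / real k)"
proof -
  define S where "S = {\<sigma>\<in>V \<rightarrow>\<^sub>E V. bij_betw \<sigma> V V \<and> (\<forall>v\<in>V. \<sigma> v \<in> N v)}"
  show ?thesis
  proof (cases "S = {}")
    case True then show ?thesis unfolding S_def[symmetric] by simp
  next
    case False
    have fS: "finite S" unfolding S_def
      by (rule finite_subset[OF _ finite_PiE[OF fV, of "\<lambda>_. V"]]) (use fV in auto)
    define s where "s = real (card S)"
    have spos: "s > 0" using False fS s_def by (simp add: card_gt_0_iff)
    define P where "P = Ps V"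
    have fP: "finite P" and neP: "P \<noteq> {}" using Ps_finite[OF fV] Ps_nonempty[OF fV] P_def by auto
    define cP where "cP = real (card P)"
    have cPpos: "cP > 0" using fP neP cP_def by (simp add: card_gt_0_iff)
    define L :: "(nat \<Rightarrow> nat) \<Rightarrow> (nat \<Rightarrow> nat) \<Rightarrow> nat \<Rightarrow> real" where "L \<sigma> p i = ln (real (card (N i - \<sigma> ` {i'\<in>V. p i' < p i})))" for \<sigma> p i
    have inner: "(\<Sum>p\<in>P. L \<sigma> p i) = cP * ln (fact k) / real k" if \<sigma>: "\<sigma> \<in> S" and i: "i \<in> V" for \<sigma> i
    proof -
      define B where "B = {b\<in>V. \<sigma> b \<in> N i}"
      have bij: "bij_betw \<sigma> V V" and inj: "inj_on \<sigma> V" and sN: "\<forall>v\<in>V. \<sigma> v \<in> N v"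
        using \<sigma> unfolding S_def by (auto simp: bij_betw_def)
      have BV: "B \<subseteq> V" unfolding B_def by auto
      have iB: "i \<in> B" unfolding B_def using i sN by auto
      have imB: "\<sigma> ` B = N i"
      proof
        show "\<sigma> ` B \<subseteq> N i" unfolding B_def by auto
        show "N i \<subseteq> \<sigma> ` B"
        proof
          fix y assume y: "y \<in> N i"
          then have "y \<in> V" using NV i by auto
          then obtain b where "b \<in> V" "y = \<sigma> b" using bij unfolding bij_betw_def by auto
          then show "y \<in> \<sigma> ` B" unfolding B_def using y by auto
        qed
      qed
      have cB: "card B = k" using card_image[OF inj_on_subset[OF inj BV]] imB cN[OF i] by simp
      have Lrk: "L \<sigma> p i = ln (real (rk p B i))" for p
      proof -
        have "\<sigma> ` {b\<in>B. \<not> p b < p i} = N i - \<sigma> ` {i'\<in>V. p i' < p i}"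
        proof
          show "\<sigma> ` {b\<in>B. \<not> p b < p i} \<subseteq> N i - \<sigma> ` {i'\<in>V. p i' < p i}"
          proof
            fix y assume "y \<in> \<sigma> ` {b\<in>B. \<not> p b < p i}"
            then obtain b where b: "b \<in> B" "\<not> p b < p i" "y = \<sigma> b" by auto
            have "y \<notin> \<sigma> ` {i'\<in>V. p i' < p i}"
            proof
              assume "y \<in> \<sigma> ` {i'\<in>V. p i' < p i}"
              then obtain c where c: "c \<in> V" "p c < p i" "y = \<sigma> c" by auto
              then have "c = b" using b BV inj by (auto simp: inj_on_def)
              then show False using b c by simp
            qed
            then show "y \<in> N i - \<sigma> ` {i'\<in>V. p i' < p i}" using b unfolding B_def by auto
          qed
          show "N i - \<sigma> ` {i'\<in>V. p i' < p i} \<subseteq> \<sigma> ` {b\<in>B. \<not> p b < p i}"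
          proof
            fix y assume y: "y \<in> N i - \<sigma> ` {i'\<in>V. p i' < p i}"
            then obtain b where b: "b \<in> B" "y = \<sigma> b" using imB by (metis DiffD1 imageE)
            have "\<not> p b < p i"
            proof
              assume "p b < p i"
              then have "y \<in> \<sigma> ` {i'\<in>V. p i' < p i}" using b BV by auto
              then show False using y by simp
            qed
            then show "y \<in> \<sigma> ` {b\<in>B. \<not> p b < p i}" using b by auto
          qed
        qed
        moreover have "inj_on \<sigma> {b\<in>B. \<not> p b < p i}" using inj BV by (auto intro: inj_on_subset)
        ultimately have "card (N i - \<sigma> ` {i'\<in>V. p i' < p i}) = rk p B i"
          unfolding rk_def using card_image by fastforce
        then show ?thesis unfolding L_def by simp
      qed
      have "(\<Sum>p\<in>P. L \<sigma> p i) = (\<Sum>p\<in>P. ln (real (rk p B i)))" by (simp add: Lrk)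
      also have "\<dots> = cP * ln (fact k) / real k"
        using avg_rank[OF fV BV iB] unfolding cB P_def cP_def .
      finally show ?thesis .
    qed
    have st: "s * ln s \<le> (\<Sum>\<sigma>\<in>S. \<Sum>i\<in>V. L \<sigma> p i)" if p: "p \<in> P" for p
      unfolding s_def L_def
    proof (rule step3[OF fV fN])
      show "S \<subseteq> {\<sigma> \<in> V \<rightarrow>\<^sub>E V. inj_on \<sigma> V \<and> (\<forall>v\<in>V. \<sigma> v \<in> N v)}"
        unfolding S_def by (auto simp: bij_betw_def)
      show "inj_on p V" using p unfolding P_def Ps_def by auto
    qed
    have "cP * (s * ln s) = (\<Sum>p\<in>P. s * ln s)" unfolding cP_def by simp
    also have "\<dots> \<le> (\<Sum>p\<in>P. \<Sum>\<sigma>\<in>S. \<Sum>i\<in>V. L \<sigma> p i)" by (rule sum_mono) (rule st)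
    also have "\<dots> = (\<Sum>\<sigma>\<in>S. \<Sum>p\<in>P. \<Sum>i\<in>V. L \<sigma> p i)"
      by (rule sum.swap)
    also have "\<dots> = (\<Sum>\<sigma>\<in>S. \<Sum>i\<in>V. \<Sum>p\<in>P. L \<sigma> p i)"
      by (rule sum.cong[OF refl]) (rule sum.swap)
    also have "\<dots> = (\<Sum>\<sigma>\<in>S. \<Sum>i\<in>V. cP * ln (fact k) / real k)"
      by (rule sum.cong[OF refl], rule sum.cong[OF refl]) (rule inner)
    also have "\<dots> = s * (real (card V) * (cP * ln (fact k) / real k))" unfolding s_def by simp
    finally have "cP * (s * ln s) \<le> s * (real (card V) * (cP * ln (fact k) / real k))" .
    then have "(cP * s) * ln s \<le> (cP * s) * (real (card V) * ln (fact k) / real k)"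
      by (simp add: algebra_simps)
    then have "ln s \<le> real (card V) * ln (fact k) / real k"
      using spos cPpos mult_le_cancel_left_pos[of "cP * s" "ln s" "real (card V) * ln (fact k) / real k"]
      by (simp only: mult_pos_pos)
    then have "exp (ln s) \<le> exp (real (card V) * ln (fact k) / real k)" by simp
    then show ?thesis using spos unfolding s_def S_def by simp
  qed
qed

definition Rel :: "nat set \<Rightarrow> (nat \<Rightarrow> nat) \<Rightarrow> (nat \<times> nat) set" where
  "Rel V h = {(x, h x) | x. x \<in> V}"
definition Sy :: "nat set \<Rightarrow> (nat \<Rightarrow> nat) \<Rightarrow> (nat \<times> nat) set" where
  "Sy V h = Rel V h \<union> (Rel V h)\<inverse>"
definition fm :: "nat set \<Rightarrow> (nat \<Rightarrow> nat) \<Rightarrow> nat \<Rightarrow> nat" where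
  "fm V h v = Min ((Sy V h)\<^sup>* `` {v})"
definition Aset :: "nat set \<Rightarrow> (nat \<Rightarrow> nat) \<Rightarrow> (nat \<Rightarrow> nat) \<Rightarrow> nat set" where
  "Aset V h m = {v\<in>V. fm V h v < fm V h (m v)}"
definition sg :: "nat set \<Rightarrow> (nat \<Rightarrow> nat) \<Rightarrow> (nat \<Rightarrow> nat) \<Rightarrow> nat \<Rightarrow> nat" where
  "sg V m1 m2 = restrict (\<lambda>v. if v \<in> Aset V (m2 \<circ> m1) m1 then m1 v else m2 v) V"

lemma Sy_sym: "(a, b) \<in> (Sy V h)\<^sup>* \<Longrightarrow> (b, a) \<in> (Sy V h)\<^sup>*"
proof -
  assume "(a, b) \<in> (Sy V h)\<^sup>*"
  then have "(b, a) \<in> ((Sy V h)\<inverse>)\<^sup>*" by (simp add: rtrancl_converse)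
  moreover have "(Sy V h)\<inverse> = Sy V h" unfolding Sy_def by auto
  ultimately show ?thesis by simp
qed

lemma comp_sub:
  assumes "\<And>x. x \<in> V \<Longrightarrow> h x \<in> V" "(v, u) \<in> (Sy V h)\<^sup>*"
  shows "u \<in> insert v V"
  using assms(2)
proof (induction rule: rtrancl_induct)
  case base then show ?case by simp
next
  case (step y z)
  then show ?case using assms(1) unfolding Sy_def Rel_def by auto
qed

lemma fm_in:
  assumes "finite V" "\<And>x. x \<in> V \<Longrightarrow> h x \<in> V"
  shows "(v, fm V h v) \<in> (Sy V h)\<^sup>*"
proof -
  have fin: "finite ((Sy V h)\<^sup>* `` {v})"
  proof -
    have "(Sy V h)\<^sup>* `` {v} \<subseteq> insert v V" using comp_sub[of V h v] assms(2) by auto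
    then show ?thesis using assms(1) finite_subset by blast
  qed
  have "v \<in> (Sy V h)\<^sup>* `` {v}" by simp
  then have "fm V h v \<in> (Sy V h)\<^sup>* `` {v}" unfolding fm_def using fin Min_in by blast
  then show ?thesis by simp
qed

lemma fm_step:
  assumes "(a, b) \<in> (Sy V h)\<^sup>*"
  shows "fm V h a = fm V h b"
proof -
  have "(Sy V h)\<^sup>* `` {a} = (Sy V h)\<^sup>* `` {b}"
    using assms Sy_sym[OF assms] by (auto intro: rtrancl_trans)
  then show ?thesis unfolding fm_def by simp
qed

locale twoinv =
  fixes V :: "nat set" and m1 m2 :: "nat \<Rightarrow> nat"
  assumes fV: "finite V"
    and m1: "\<And>v. v \<in> V \<Longrightarrow> m1 v \<in> V \<and> m1 (m1 v) = v \<and> m1 v \<noteq> v"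
    and m2: "\<And>v. v \<in> V \<Longrightarrow> m2 v \<in> V \<and> m2 (m2 v) = v \<and> m2 v \<noteq> v"
begin

definition "\<rho> = m2 \<circ> m1"
definition "\<rho>' = m1 \<circ> m2"

lemma rV: "x \<in> V \<Longrightarrow> \<rho> x \<in> V" and r'V: "x \<in> V \<Longrightarrow> \<rho>' x \<in> V"
  unfolding \<rho>_def \<rho>'_def using m1 m2 by auto

lemma rr': "x \<in> V \<Longrightarrow> \<rho>' (\<rho> x) = x" and r'r: "x \<in> V \<Longrightarrow> \<rho> (\<rho>' x) = x"
  unfolding \<rho>_def \<rho>'_def using m1 m2 by auto

lemma powV: "x \<in> V \<Longrightarrow> (\<rho> ^^ j) x \<in> V" and pow'V: "x \<in> V \<Longrightarrow> (\<rho>' ^^ j) x \<in> V"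
  by (induction j) (auto simp: rV r'V)

lemma cancel: "x \<in> V \<Longrightarrow> (\<rho>' ^^ a) ((\<rho> ^^ (a + b)) x) = (\<rho> ^^ b) x"
proof (induction a)
  case 0 then show ?case by simp
next
  case (Suc a)
  have e1: "(\<rho> ^^ (Suc a + b)) x = \<rho> ((\<rho> ^^ (a + b)) x)" by simp
  have e2: "(\<rho>' ^^ Suc a) y = (\<rho>' ^^ a) (\<rho>' y)" for y by (simp add: funpow_swap1)
  have "(\<rho>' ^^ Suc a) ((\<rho> ^^ (Suc a + b)) x) = (\<rho>' ^^ a) (\<rho>' (\<rho> ((\<rho> ^^ (a + b)) x)))"
    unfolding e1 e2 ..
  also have "\<dots> = (\<rho>' ^^ a) ((\<rho> ^^ (a + b)) x)" using rr' powV Suc.prems by simp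
  finally show ?case using Suc by simp
qed

lemma m1r': "y \<in> V \<Longrightarrow> m1 (\<rho>' y) = \<rho> (m1 y)"
  unfolding \<rho>_def \<rho>'_def using m1[of "m2 y"] m1[of y] m2[of y] by simp

lemma comm1: "x \<in> V \<Longrightarrow> m1 ((\<rho> ^^ j) x) = (\<rho>' ^^ j) (m1 x)"
proof (induction j)
  case 0 then show ?case by simp
next
  case (Suc j)
  have y: "(\<rho> ^^ j) x \<in> V" using powV Suc.prems by blast
  have "m1 ((\<rho> ^^ Suc j) x) = m1 (\<rho> ((\<rho> ^^ j) x))" by simp
  also have "\<dots> = \<rho>' (m1 ((\<rho> ^^ j) x))" unfolding \<rho>_def \<rho>'_def using m1 y by simp
  finally show ?case using Suc by simp
qed

lemma comm1': "x \<in> V \<Longrightarrow> m1 ((\<rho>' ^^ j) x) = (\<rho> ^^ j) (m1 x)"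
proof (induction j)
  case 0 then show ?case by simp
next
  case (Suc j)
  have y: "(\<rho>' ^^ j) x \<in> V" using pow'V Suc.prems by blast
  have "m1 ((\<rho>' ^^ Suc j) x) = m1 (\<rho>' ((\<rho>' ^^ j) x))" by simp
  also have "\<dots> = \<rho> (m1 ((\<rho>' ^^ j) x))" using m1r' y by blast
  finally show ?case using Suc by simp
qed

lemma reach:
  assumes "v \<in> V" "(v, u) \<in> (Sy V \<rho>)\<^sup>*"
  shows "\<exists>j. u = (\<rho> ^^ j) v \<or> u = (\<rho>' ^^ j) v"
  using assms(2)
proof (induction rule: rtrancl_induct)
  case base then show ?case by (intro exI[of _ 0]) simp
next
  case (step y z)
  then obtain j where j: "y = (\<rho> ^^ j) v \<or> y = (\<rho>' ^^ j) v" by blast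
  have yV: "y \<in> V" using j powV pow'V assms(1) by blast
  from step.hyps(2) consider "z = \<rho> y" | "y = \<rho> z" "z \<in> V" unfolding Sy_def Rel_def by auto
  then show ?case
  proof cases
    case 1
    show ?thesis
    proof (cases "y = (\<rho> ^^ j) v")
      case True then show ?thesis using 1 by (intro exI[of _ "Suc j"]) simp
    next
      case False
      then have yj: "y = (\<rho>' ^^ j) v" using j by blast
      show ?thesis
      proof (cases j)
        case 0 then show ?thesis using 1 yj by (intro exI[of _ 1]) simp
      next
        case (Suc i)
        have "z = \<rho> (\<rho>' ((\<rho>' ^^ i) v))" using 1 yj Suc by simp
        also have "\<dots> = (\<rho>' ^^ i) v" using r'r pow'V assms(1) by blast
        finally show ?thesis by blast
      qed
    qed
  next
    case 2
    have zy: "z = \<rho>' y" using 2 rr' by simp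
    show ?thesis
    proof (cases "y = (\<rho>' ^^ j) v")
      case True then show ?thesis using zy by (intro exI[of _ "Suc j"]) simp
    next
      case False
      then have yj: "y = (\<rho> ^^ j) v" using j by blast
      show ?thesis
      proof (cases j)
        case 0 then show ?thesis using zy yj by (intro exI[of _ 1]) simp
      next
        case (Suc i)
        have "z = \<rho>' (\<rho> ((\<rho> ^^ i) v))" using zy yj Suc by simp
        also have "\<dots> = (\<rho> ^^ i) v" using rr' powV assms(1) by blast
        finally show ?thesis by blast
      qed
    qed
  qed
qed

lemma not_pow: "v \<in> V \<Longrightarrow> m1 v \<noteq> (\<rho> ^^ j) v"
proof
  assume v: "v \<in> V" and eq: "m1 v = (\<rho> ^^ j) v"
  obtain a where "j = 2 * a \<or> j = 2 * a + 1" by (metis oddE evenE)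
  then show False
  proof
    assume j: "j = 2 * a"
    define u where "u = (\<rho> ^^ a) v"
    have uV: "u \<in> V" using powV v u_def by blast
    have "m1 u = (\<rho>' ^^ a) (m1 v)" unfolding u_def using comm1 v by blast
    also have "\<dots> = (\<rho>' ^^ a) ((\<rho> ^^ (a + a)) v)" using eq j by (simp add: mult_2)
    also have "\<dots> = u" unfolding u_def using cancel v by blast
    finally show False using m1 uV by blast
  next
    assume j: "j = 2 * a + 1"
    define u where "u = (\<rho> ^^ a) v"
    have uV: "u \<in> V" using powV v u_def by blast
    have "m1 u = (\<rho>' ^^ a) (m1 v)" unfolding u_def using comm1 v by blast
    also have "\<dots> = (\<rho>' ^^ a) ((\<rho> ^^ (a + Suc a)) v)" using eq j by (simp add: mult_2)
    also have "\<dots> = (\<rho> ^^ Suc a) v" using cancel v by blast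
    also have "\<dots> = \<rho> u" unfolding u_def by simp
    finally have "m1 u = m2 (m1 u)" unfolding \<rho>_def by simp
    then show False using m1 m2 uV by metis
  qed
qed

lemma not_reach: "v \<in> V \<Longrightarrow> (v, m1 v) \<notin> (Sy V \<rho>)\<^sup>*"
proof
  assume v: "v \<in> V" and r: "(v, m1 v) \<in> (Sy V \<rho>)\<^sup>*"
  then obtain j where "m1 v = (\<rho> ^^ j) v \<or> m1 v = (\<rho>' ^^ j) v" using reach by blast
  then show False
  proof
    assume "m1 v = (\<rho> ^^ j) v" then show False using not_pow v by blast
  next
    assume e: "m1 v = (\<rho>' ^^ j) v"
    have "v = m1 (m1 v)" using m1 v by simp
    also have "\<dots> = (\<rho> ^^ j) (m1 v)" using e comm1' v by simp
    finally show False using not_pow[of "m1 v" j] m1 v by simp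
  qed
qed


abbreviation "f \<equiv> fm V \<rho>"
abbreviation "A \<equiv> Aset V \<rho> m1"
abbreviation "\<sigma> \<equiv> sg V m1 m2"

lemma F1: "v \<in> V \<Longrightarrow> f v \<noteq> f (m1 v)"
proof
  assume v: "v \<in> V" and e: "f v = f (m1 v)"
  have a: "(v, f v) \<in> (Sy V \<rho>)\<^sup>*" by (rule fm_in[OF fV rV])
  have b: "(m1 v, f (m1 v)) \<in> (Sy V \<rho>)\<^sup>*" by (rule fm_in[OF fV rV])
  have "(v, m1 v) \<in> (Sy V \<rho>)\<^sup>*" using a Sy_sym[OF b] e by (metis rtrancl_trans)
  then show False using not_reach v by blast
qed

lemma F4: "u \<in> V \<Longrightarrow> f (\<rho> u) = f u"
proof -
  assume u: "u \<in> V"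
  then have "(u, \<rho> u) \<in> Sy V \<rho>" unfolding Sy_def Rel_def by auto
  then have "(u, \<rho> u) \<in> (Sy V \<rho>)\<^sup>*" by blast
  then show ?thesis using fm_step[of u "\<rho> u" V \<rho>] by simp
qed

lemma F4': "u \<in> V \<Longrightarrow> f (\<rho>' u) = f u"
  using F4[of "\<rho>' u"] r'V r'r by simp

lemma F3: "v \<in> V \<Longrightarrow> f (m2 v) = f (m1 v)"
proof -
  assume v: "v \<in> V"
  have "m2 v = \<rho> (m1 v)" unfolding \<rho>_def using m1 v by simp
  then show ?thesis using F4 m1 v by simp
qed

lemma A_iff: "v \<in> A \<longleftrightarrow> v \<in> V \<and> f v < f (m1 v)" unfolding Aset_def by simp

lemma m1A: "v \<in> V \<Longrightarrow> m1 v \<in> A \<longleftrightarrow> v \<notin> A"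
  using F1[of v] m1[of v] A_iff by (metis linorder_neqE_nat less_asym)

lemma m2A: "v \<in> V \<Longrightarrow> m2 v \<in> A \<longleftrightarrow> v \<notin> A"
proof -
  assume v: "v \<in> V"
  have e: "m1 (m2 v) = \<rho>' v" unfolding \<rho>'_def by simp
  have "m2 v \<in> A \<longleftrightarrow> f (m1 v) < f v" using A_iff[of "m2 v"] e F3[OF v] F4'[OF v] m2 v by simp
  then show ?thesis using F1[OF v] A_iff v by (metis linorder_neqE_nat less_asym)
qed

lemma rA: "v \<in> V \<Longrightarrow> \<rho> v \<in> A \<longleftrightarrow> v \<in> A"
proof -
  assume v: "v \<in> V"
  have e: "m1 (\<rho> v) = \<rho>' (m1 v)" unfolding \<rho>_def \<rho>'_def by simp
  show ?thesis using A_iff[of "\<rho> v"] A_iff[of v] e F4[OF v] F4'[of "m1 v"] m1 v rV[OF v] by simp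
qed

lemma sg_eq: "v \<in> V \<Longrightarrow> \<sigma> v = (if v \<in> A then m1 v else m2 v)"
  unfolding sg_def \<rho>_def by simp

lemma sgV: "v \<in> V \<Longrightarrow> \<sigma> v \<in> V" using sg_eq m1 m2 by simp

lemma sgsg: "v \<in> V \<Longrightarrow> \<sigma> (\<sigma> v) = (if v \<in> A then \<rho> v else \<rho>' v)"
proof -
  assume v: "v \<in> V"
  show ?thesis
  proof (cases "v \<in> A")
    case True
    then have "m1 v \<notin> A" using m1A v by blast
    then show ?thesis using True sg_eq v m1[of v] unfolding \<rho>_def by simp
  next
    case False
    then have "m2 v \<in> A" using m2A v by blast
    then show ?thesis using False sg_eq v m2[of v] unfolding \<rho>'_def by simp
  qed
qed

lemma Sy_eq: "Sy V \<rho> = Sy V (\<sigma> \<circ> \<sigma>)"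
proof -
  have s1: "Rel V (\<sigma> \<circ> \<sigma>) \<subseteq> Sy V \<rho>"
  proof
    fix q assume "q \<in> Rel V (\<sigma> \<circ> \<sigma>)"
    then obtain v where v: "v \<in> V" "q = (v, \<sigma> (\<sigma> v))" unfolding Rel_def by auto
    show "q \<in> Sy V \<rho>"
    proof (cases "v \<in> A")
      case True then show ?thesis using v sgsg unfolding Sy_def Rel_def by auto
    next
      case False
      then have "q = (v, \<rho>' v)" using v sgsg by simp
      moreover have "(\<rho>' v, v) \<in> Rel V \<rho>" unfolding Rel_def using r'V r'r v by force
      ultimately show ?thesis unfolding Sy_def by auto
    qed
  qed
  have s2: "Rel V \<rho> \<subseteq> Sy V (\<sigma> \<circ> \<sigma>)"
  proof
    fix q assume "q \<in> Rel V \<rho>"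
    then obtain v where v: "v \<in> V" "q = (v, \<rho> v)" unfolding Rel_def by auto
    show "q \<in> Sy V (\<sigma> \<circ> \<sigma>)"
    proof (cases "v \<in> A")
      case True then show ?thesis using v sgsg unfolding Sy_def Rel_def by auto
    next
      case False
      then have "\<rho> v \<notin> A" using rA v by blast
      then have "\<sigma> (\<sigma> (\<rho> v)) = v" using sgsg rV v rr' by simp
      then have "(\<rho> v, v) \<in> Rel V (\<sigma> \<circ> \<sigma>)" unfolding Rel_def using rV v by force
      then show ?thesis using v unfolding Sy_def by auto
    qed
  qed
  show ?thesis
  proof
    show "Sy V \<rho> \<subseteq> Sy V (\<sigma> \<circ> \<sigma>)" using s2 unfolding Sy_def by auto
    show "Sy V (\<sigma> \<circ> \<sigma>) \<subseteq> Sy V \<rho>" using s1 unfolding Sy_def by auto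
  qed
qed

lemma fm_eq: "fm V (\<sigma> \<circ> \<sigma>) = f"
  unfolding fm_def[abs_def] using Sy_eq by simp

lemma Asg: "Aset V (\<sigma> \<circ> \<sigma>) \<sigma> = A"
proof -
  have "v \<in> Aset V (\<sigma> \<circ> \<sigma>) \<sigma> \<longleftrightarrow> v \<in> A" for v
  proof (cases "v \<in> V")
    case False then show ?thesis unfolding Aset_def by simp
  next
    case v: True
    show ?thesis
    proof (cases "v \<in> A")
      case True
      then show ?thesis using v sg_eq unfolding Aset_def fm_eq by simp
    next
      case False
      then have "f (m1 v) < f v" using F1[OF v] A_iff v by (metis linorder_neqE_nat)
      then have "\<not> f v < f (\<sigma> v)" using False sg_eq v F3[OF v] by simp
      then show ?thesis using False unfolding Aset_def fm_eq by simp
    qed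
  qed
  then show ?thesis by blast
qed

lemma sg_inj: "inj_on \<sigma> V"
proof (rule inj_onI)
  fix x y assume x: "x \<in> V" and y: "y \<in> V" and e: "\<sigma> x = \<sigma> y"
  show "x = y"
  proof (cases "x \<in> A"; cases "y \<in> A")
    assume "x \<in> A" "y \<in> A"
    then have "m1 x = m1 y" using e sg_eq x y by simp
    then show "x = y" using m1 x y by metis
  next
    assume "x \<notin> A" "y \<notin> A"
    then have "m2 x = m2 y" using e sg_eq x y by simp
    then show "x = y" using m2 x y by metis
  next
    assume a: "x \<in> A" "y \<notin> A"
    then have "m1 x = m2 y" using e sg_eq x y by simp
    moreover have "m1 x \<notin> A" using m1A x a by blast
    moreover have "m2 y \<in> A" using m2A y a by blast
    ultimately show "x = y" by simp
  next
    assume a: "x \<notin> A" "y \<in> A"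
    then have "m2 x = m1 y" using e sg_eq x y by simp
    moreover have "m1 y \<notin> A" using m1A y a by blast
    moreover have "m2 x \<in> A" using m2A x a by blast
    ultimately show "x = y" by simp
  qed
qed

end

definition Inv :: "nat set \<Rightarrow> (nat \<Rightarrow> nat set) \<Rightarrow> (nat \<Rightarrow> nat) set" where
  "Inv V N = {m \<in> V \<rightarrow>\<^sub>E V. \<forall>v\<in>V. m (m v) = v \<and> m v \<noteq> v \<and> m v \<in> N v}"
definition Sp :: "nat set \<Rightarrow> (nat \<Rightarrow> nat set) \<Rightarrow> (nat \<Rightarrow> nat) set" where
  "Sp V N = {\<sigma> \<in> V \<rightarrow>\<^sub>E V. bij_betw \<sigma> V V \<and> (\<forall>v\<in>V. \<sigma> v \<in> N v)}"

lemma Inv_twoinv: "finite V \<Longrightarrow> m1 \<in> Inv V N \<Longrightarrow> m2 \<in> Inv V N \<Longrightarrow> twoinv V m1 m2"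
  unfolding Inv_def twoinv_def by (auto simp: PiE_def Pi_def)

lemma sg_in_Sp:
  assumes fV: "finite V" and a: "m1 \<in> Inv V N" "m2 \<in> Inv V N"
  shows "sg V m1 m2 \<in> Sp V N"
proof -
  interpret twoinv V m1 m2 by (rule Inv_twoinv[OF fV a])
  have im: "\<sigma> ` V \<subseteq> V" using sgV by auto
  have "\<sigma> ` V = V" using endo_inj_surj[OF fV im sg_inj] .
  then have bij: "bij_betw \<sigma> V V" using sg_inj by (simp add: bij_betw_def)
  have "\<sigma> \<in> V \<rightarrow>\<^sub>E V" unfolding sg_def using sgV[unfolded sg_def] by auto
  moreover have "\<forall>v\<in>V. \<sigma> v \<in> N v" using sg_eq a unfolding Inv_def by auto
  ultimately show ?thesis unfolding Sp_def using bij by simp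
qed

lemma sg_inj2:
  assumes fV: "finite V" and a: "m1 \<in> Inv V N" "m2 \<in> Inv V N" and b: "n1 \<in> Inv V N" "n2 \<in> Inv V N"
    and e: "sg V m1 m2 = sg V n1 n2"
  shows "m1 = n1 \<and> m2 = n2"
proof -
  interpret M: twoinv V m1 m2 by (rule Inv_twoinv[OF fV a])
  interpret N: twoinv V n1 n2 by (rule Inv_twoinv[OF fV b])
  have AA: "M.A = N.A" using M.Asg N.Asg e by simp
  have extn: "\<And>m v. m \<in> Inv V N \<Longrightarrow> v \<notin> V \<Longrightarrow> m v = undefined" unfolding Inv_def by (auto simp: PiE_def extensional_def)
  have "m1 v = n1 v" for v
  proof (cases "v \<in> V")
    case False then show ?thesis using extn[OF a(1) False] extn[OF b(1) False] by simp
  next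
    case v: True
    show ?thesis
    proof (cases "v \<in> M.A")
      case True
      then show ?thesis using M.sg_eq[OF v] N.sg_eq[OF v] AA e by simp
    next
      case False
      have n1A: "n1 v \<in> M.A" using N.m1A[OF v] False AA by simp
      have n1V: "n1 v \<in> V" using N.m1 v by blast
      have "sg V n1 n2 (n1 v) = n1 (n1 v)" using N.sg_eq[OF n1V] n1A AA by simp
      moreover have "sg V m1 m2 (n1 v) = m1 (n1 v)" using M.sg_eq[OF n1V] n1A by simp
      ultimately have "m1 (n1 v) = v" using e N.m1[OF v] by simp
      then show ?thesis using M.m1[OF n1V] by metis
    qed
  qed
  moreover have "m2 v = n2 v" for v
  proof (cases "v \<in> V")
    case False then show ?thesis using extn[OF a(2) False] extn[OF b(2) False] by simp
  next
    case v: True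
    show ?thesis
    proof (cases "v \<in> M.A")
      case False
      then show ?thesis using M.sg_eq[OF v] N.sg_eq[OF v] AA e by simp
    next
      case True
      have n2A: "n2 v \<notin> M.A" using N.m2A[OF v] True AA by simp
      have n2V: "n2 v \<in> V" using N.m2 v by blast
      have "sg V n1 n2 (n2 v) = n2 (n2 v)" using N.sg_eq[OF n2V] n2A AA by simp
      moreover have "sg V m1 m2 (n2 v) = m2 (n2 v)" using M.sg_eq[OF n2V] n2A by simp
      ultimately have "m2 (n2 v) = v" using e N.m2[OF v] by simp
      then show ?thesis using M.m2[OF n2V] by metis
    qed
  qed
  ultimately show ?thesis by (simp add: fun_eq_iff)
qed

lemma Sp_finite: "finite V \<Longrightarrow> finite (Sp V N)"
  unfolding Sp_def by (rule finite_subset[OF _ finite_PiE[of V "\<lambda>_. V"]]) auto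

lemma pm_sq: "finite V \<Longrightarrow> card (Inv V N) * card (Inv V N) \<le> card (Sp V N)"
proof -
  assume fV: "finite V"
  have "inj_on (\<lambda>q. sg V (fst q) (snd q)) (Inv V N \<times> Inv V N)"
    by (rule inj_onI) (use sg_inj2[OF fV] in \<open>auto simp: prod_eq_iff\<close>)
  moreover have "(\<lambda>q. sg V (fst q) (snd q)) ` (Inv V N \<times> Inv V N) \<subseteq> Sp V N"
    using sg_in_Sp[OF fV] by auto
  ultimately have "card (Inv V N \<times> Inv V N) \<le> card (Sp V N)"
    using card_inj_on_le Sp_finite[OF fV] by blast
  then show ?thesis by (simp add: card_cartesian_product)
qed

definition Nb :: "nat set \<Rightarrow> nat set set \<Rightarrow> nat \<Rightarrow> nat set" where
  "Nb V E v = {u\<in>V. {v, u} \<in> E}"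

definition partner :: "nat set \<Rightarrow> nat set set \<Rightarrow> nat \<Rightarrow> nat" where
  "partner V M = restrict (\<lambda>v. THE u. u \<noteq> v \<and> {v, u} \<in> M) V"

lemma partner_prop:
  assumes sg: "simple_graph V E" and pm: "perfect_matching V E M" and v: "v \<in> V"
  shows "partner V M v \<noteq> v \<and> {v, partner V M v} \<in> M \<and> partner V M v \<in> V"
proof -
  obtain e where e: "e \<in> M" "v \<in> e" and uq: "\<And>e'. e' \<in> M \<Longrightarrow> v \<in> e' \<Longrightarrow> e' = e"
    using pm v unfolding perfect_matching_def by blast
  have "e \<in> E" using e pm unfolding perfect_matching_def by blast
  then obtain a b where ab: "a \<in> V" "b \<in> V" "a \<noteq> b" "e = {a, b}" using sg unfolding simple_graph_def by blast
  define u where "u = (if a = v then b else a)"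
  have u: "u \<noteq> v" "e = {v, u}" "u \<in> V" using ab e(2) u_def by auto
  have ex: "\<And>u'. u' \<noteq> v \<and> {v, u'} \<in> M \<Longrightarrow> u' = u"
  proof -
    fix u' assume a: "u' \<noteq> v \<and> {v, u'} \<in> M"
    then have "{v, u'} = e" using uq by blast
    then show "u' = u" using u a by (auto simp: doubleton_eq_iff)
  qed
  have "(THE u'. u' \<noteq> v \<and> {v, u'} \<in> M) = u"
  proof (rule the_equality)
    show "u \<noteq> v \<and> {v, u} \<in> M" using u e by simp
    show "\<And>u'. u' \<noteq> v \<and> {v, u'} \<in> M \<Longrightarrow> u' = u" by (rule ex)
  qed
  then have "partner V M v = u" unfolding partner_def using v by simp
  then show ?thesis using u e by simp
qed

lemma partner_invol:
  assumes sg: "simple_graph V E" and pm: "perfect_matching V E M" and v: "v \<in> V"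
  shows "partner V M (partner V M v) = v"
proof -
  define u where "u = partner V M v"
  have u: "u \<noteq> v" "{v, u} \<in> M" "u \<in> V" using partner_prop[OF sg pm v] u_def by auto
  have w: "partner V M u \<noteq> u" "{u, partner V M u} \<in> M" "partner V M u \<in> V" using partner_prop[OF sg pm u(3)] by auto
  obtain e where "e \<in> M" "u \<in> e" and uq: "\<And>e'. e' \<in> M \<Longrightarrow> u \<in> e' \<Longrightarrow> e' = e"
    using pm u(3) unfolding perfect_matching_def by blast
  then have "{u, partner V M u} = {v, u}" using u(2) w(2) by blast
  then show ?thesis using w(1) u(1) unfolding u_def[symmetric] by (auto simp: doubleton_eq_iff)
qed

lemma partner_in_Inv:
  assumes sg: "simple_graph V E" and pm: "perfect_matching V E M"
  shows "partner V M \<in> Inv V (Nb V E)"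
proof -
  have "partner V M \<in> V \<rightarrow>\<^sub>E V" using partner_prop[OF sg pm] unfolding partner_def by auto
  moreover have "\<forall>v\<in>V. partner V M (partner V M v) = v \<and> partner V M v \<noteq> v \<and> partner V M v \<in> Nb V E v"
    using partner_prop[OF sg pm] partner_invol[OF sg pm] pm unfolding Nb_def perfect_matching_def by blast
  ultimately show ?thesis unfolding Inv_def by simp
qed

lemma M_from_partner:
  assumes sg: "simple_graph V E" and pm: "perfect_matching V E M"
  shows "M = (\<lambda>v. {v, partner V M v}) ` V"
proof
  show "(\<lambda>v. {v, partner V M v}) ` V \<subseteq> M" using partner_prop[OF sg pm] by auto
  show "M \<subseteq> (\<lambda>v. {v, partner V M v}) ` V"
  proof
    fix e assume e: "e \<in> M"
    then have "e \<in> E" using pm unfolding perfect_matching_def by blast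
    then obtain a b where ab: "a \<in> V" "b \<in> V" "a \<noteq> b" "e = {a, b}" using sg unfolding simple_graph_def by blast
    have p: "partner V M a \<noteq> a" "{a, partner V M a} \<in> M" using partner_prop[OF sg pm ab(1)] by auto
    obtain e' where "e' \<in> M" "a \<in> e'" and uq: "\<And>e''. e'' \<in> M \<Longrightarrow> a \<in> e'' \<Longrightarrow> e'' = e'"
      using pm ab(1) unfolding perfect_matching_def by blast
    then have "e = {a, partner V M a}" using e ab(4) p(2) by blast
    then show "e \<in> (\<lambda>v. {v, partner V M v}) ` V" using ab(1) by blast
  qed
qed

lemma card_Nb:
  assumes sg: "simple_graph V E" and v: "v \<in> V"
  shows "card (Nb V E v) = card {e\<in>E. v \<in> e}"
proof -
  have "bij_betw (\<lambda>u. {v, u}) (Nb V E v) {e\<in>E. v \<in> e}"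
  proof (rule bij_betwI')
    show "\<And>x y. x \<in> Nb V E v \<Longrightarrow> y \<in> Nb V E v \<Longrightarrow> ({v, x} = {v, y}) = (x = y)"
      by (auto simp: doubleton_eq_iff)
    show "\<And>x. x \<in> Nb V E v \<Longrightarrow> {v, x} \<in> {e \<in> E. v \<in> e}" unfolding Nb_def by auto
    show "\<exists>x\<in>Nb V E v. y = {v, x}" if y: "y \<in> {e \<in> E. v \<in> e}" for y
    proof -
      obtain a b where ab: "a \<in> V" "b \<in> V" "a \<noteq> b" "y = {a, b}" using sg y unfolding simple_graph_def by blast
      define u where "u = (if a = v then b else a)"
      have "u \<in> V" "y = {v, u}" using ab y u_def by auto
      then show ?thesis using y unfolding Nb_def by auto
    qed
  qed
  then show ?thesis by (rule bij_betw_same_card)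
qed

lemma pm_bound:
  fixes V :: "nat set" and E :: "nat set set"
  assumes sg: "simple_graph V E" and deg: "\<And>v. v \<in> V \<Longrightarrow> card {e\<in>E. v \<in> e} = k"
  shows "real (card {M. perfect_matching V E M}) \<le> exp (real (card V) * ln (fact k) / (2 * real k))"
proof -
  have fV: "finite V" using sg unfolding simple_graph_def by blast
  have "card {M. perfect_matching V E M} \<le> card (Inv V (Nb V E))"
  proof (rule card_inj_on_le[where f = "partner V"])
    show "inj_on (partner V) {M. perfect_matching V E M}"
      by (rule inj_onI) (metis M_from_partner[OF sg] mem_Collect_eq)
    show "partner V ` {M. perfect_matching V E M} \<subseteq> Inv V (Nb V E)" using partner_in_Inv[OF sg] by auto
    show "finite (Inv V (Nb V E))" unfolding Inv_def
      by (rule finite_subset[OF _ finite_PiE[OF fV, of "\<lambda>_. V"]]) (use fV in auto)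
  qed
  moreover have "real (card (Inv V (Nb V E))) * real (card (Inv V (Nb V E))) \<le> exp (real (card V) * ln (fact k) / real k)"
  proof -
    have "real (card (Inv V (Nb V E)) * card (Inv V (Nb V E))) \<le> real (card (Sp V (Nb V E)))"
      using pm_sq[OF fV, of "Nb V E"] by (simp only: of_nat_le_iff)
    also have "\<dots> \<le> exp (real (card V) * ln (fact k) / real k)"
      unfolding Sp_def
    proof (rule bregman[OF fV])
      show "\<And>v. v \<in> V \<Longrightarrow> Nb V E v \<subseteq> V" unfolding Nb_def by auto
      show "\<And>v. v \<in> V \<Longrightarrow> card (Nb V E v) = k" using card_Nb[OF sg] deg by simp
      show "\<And>i. finite (Nb V E i)" unfolding Nb_def using fV by simp
    qed
    finally show ?thesis by simp
  qed
  ultimately have c: "real (card {M. perfect_matching V E M}) * real (card {M. perfect_matching V E M}) \<le> exp (real (card V) * ln (fact k) / real k)"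
  proof -
    have "real (card {M. perfect_matching V E M}) \<le> real (card (Inv V (Nb V E)))" using \<open>card _ \<le> card _\<close> by simp
    then have "real (card {M. perfect_matching V E M}) * real (card {M. perfect_matching V E M}) \<le> real (card (Inv V (Nb V E))) * real (card (Inv V (Nb V E)))"
      by (intro mult_mono) auto
    then show ?thesis using \<open>real (card (Inv V (Nb V E))) * real (card (Inv V (Nb V E))) \<le> _\<close> by linarith
  qed
  define y where "y = real (card V) * ln (fact k) / (2 * real k)"
  have "real (card V) * ln (fact k) / real k = y + y" unfolding y_def by (simp add: field_simps)
  then have "exp (real (card V) * ln (fact k) / real k) = exp y * exp y" by (simp only: exp_add)
  then have "(real (card {M. perfect_matching V E M}))\<^sup>2 \<le> (exp y)\<^sup>2" using c by (simp only: power2_eq_square)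
  then show ?thesis unfolding y_def[symmetric] by (rule power2_le_imp_le) simp
qed

lemma E_finite: "simple_graph V E \<Longrightarrow> finite E"
proof -
  assume sg: "simple_graph V E"
  have "E \<subseteq> Pow V" using sg unfolding simple_graph_def by auto
  moreover have "finite V" using sg unfolding simple_graph_def by blast
  moreover have "finite (Pow V)" using \<open>finite V\<close> by simp
  ultimately show ?thesis using finite_subset by blast
qed

lemma OF_finite: "finite E \<Longrightarrow> finite (one_factorizations V E d)"
proof -
  assume fE: "finite E"
  have "finite ({..<d} \<rightarrow>\<^sub>E Pow E)" by (rule finite_PiE) (use fE in simp_all)
  moreover have "one_factorizations V E d \<subseteq> {..<d} \<rightarrow>\<^sub>E Pow E" unfolding one_factorizations_def by blast
  ultimately show ?thesis using finite_subset by blast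
qed

lemma remove_pm_regular:
  assumes sg: "simple_graph V E" and deg: "\<And>v. v \<in> V \<Longrightarrow> card {e\<in>E. v \<in> e} = Suc d"
    and pm: "perfect_matching V E M"
  shows "simple_graph V (E - M)" "\<And>v. v \<in> V \<Longrightarrow> card {e\<in>E - M. v \<in> e} = d"
proof -
  show "simple_graph V (E - M)" using sg unfolding simple_graph_def by blast
  fix v assume v: "v \<in> V"
  obtain e where e: "e \<in> M" "v \<in> e" and uq: "\<And>e'. e' \<in> M \<Longrightarrow> v \<in> e' \<Longrightarrow> e' = e"
    using pm v unfolding perfect_matching_def by blast
  have eE: "e \<in> E" using e pm unfolding perfect_matching_def by blast
  have "{e'\<in>E - M. v \<in> e'} = {e'\<in>E. v \<in> e'} - {e}"
    using e uq eE pm unfolding perfect_matching_def by blast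
  moreover have "finite {e'\<in>E. v \<in> e'}" using E_finite[OF sg] by simp
  ultimately show "card {e\<in>E - M. v \<in> e} = d" using deg[OF v] e eE by (simp add: card_Diff_singleton)
qed

lemma OF_bound:
  fixes V :: "nat set" and E :: "nat set set"
  assumes "simple_graph V E" "\<And>v. v \<in> V \<Longrightarrow> card {e\<in>E. v \<in> e} = d"
  shows "real (card (one_factorizations V E d)) \<le> (\<Prod>k\<in>{1..d}. exp (real (card V) * ln (fact k) / (2 * real k)))"
  using assms
proof (induction d arbitrary: E)
  case 0
  have s0: "one_factorizations V E 0 \<subseteq> {\<lambda>_. undefined}" unfolding one_factorizations_def by auto
  have "card (one_factorizations V E 0) \<le> 1" using card_mono[OF _ s0] by simp
  then show ?case by simp
next
  case (Suc d)
  note sg = Suc.prems(1) and deg = Suc.prems(2)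
  have fE: "finite E" using E_finite[OF sg] .
  define PM where "PM = {M. perfect_matching V E M}"
  have fPM: "finite PM" unfolding PM_def perfect_matching_def
    by (rule finite_subset[of _ "Pow E"]) (use fE in auto)
  define \<Phi> where "\<Phi> F = (F 0, restrict (\<lambda>i. F (Suc i)) {..<d})" for F :: "nat \<Rightarrow> nat set set"
  define T where "T = Sigma PM (\<lambda>M. one_factorizations V (E - M) d)"
  have fT: "finite T" unfolding T_def using fPM fE by (intro finite_SigmaI OF_finite) auto
  have into: "\<Phi> F \<in> T" if F: "F \<in> one_factorizations V E (Suc d)" for F
  proof -
    have Fpi: "F \<in> {..<Suc d} \<rightarrow>\<^sub>E Pow E" and Fpm: "\<forall>i<Suc d. perfect_matching V E (F i)"
      and Fd: "\<forall>i<Suc d. \<forall>j<Suc d. i \<noteq> j \<longrightarrow> F i \<inter> F j = {}" and Fu: "(\<Union>i<Suc d. F i) = E"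
      using F unfolding one_factorizations_def by auto
    have pm0: "F 0 \<in> PM" unfolding PM_def using Fpm by simp
    define G where "G = restrict (\<lambda>i. F (Suc i)) {..<d}"
    have dis0: "\<And>i. i < d \<Longrightarrow> F (Suc i) \<inter> F 0 = {}" using Fd by auto
    have sub: "\<And>i. i < d \<Longrightarrow> F (Suc i) \<subseteq> E" using Fpi by auto
    have "G \<in> {..<d} \<rightarrow>\<^sub>E Pow (E - F 0)" unfolding G_def using dis0 sub by auto
    moreover have "\<forall>i<d. perfect_matching V (E - F 0) (G i)"
    proof (intro allI impI)
      fix i assume i: "i < d"
      have p: "perfect_matching V E (F (Suc i))" using Fpm i by simp
      have dd: "F (Suc i) \<inter> F 0 = {}" using dis0 i .
      have "G i = F (Suc i)" unfolding G_def using i by simp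
      then show "perfect_matching V (E - F 0) (G i)" using p dd unfolding perfect_matching_def by blast
    qed
    moreover have "\<forall>i<d. \<forall>j<d. i \<noteq> j \<longrightarrow> G i \<inter> G j = {}" unfolding G_def using Fd by auto
    moreover have "(\<Union>i<d. G i) = E - F 0"
    proof -
      have "E = F 0 \<union> (\<Union>i<d. F (Suc i))" using Fu unfolding lessThan_Suc_eq_insert_0 by auto
      moreover have "(\<Union>i<d. F (Suc i)) \<inter> F 0 = {}" using dis0 by auto
      ultimately have "E - F 0 = (\<Union>i<d. F (Suc i))" by blast
      then show ?thesis unfolding G_def by auto
    qed
    ultimately have "G \<in> one_factorizations V (E - F 0) d" unfolding one_factorizations_def by simp
    then show ?thesis unfolding \<Phi>_def T_def G_def using pm0 by simp
  qed
  have inj: "inj_on \<Phi> (one_factorizations V E (Suc d))"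
  proof (rule inj_onI)
    fix F F' assume F: "F \<in> one_factorizations V E (Suc d)" and F': "F' \<in> one_factorizations V E (Suc d)"
      and e: "\<Phi> F = \<Phi> F'"
    have x1: "F \<in> extensional {..<Suc d}" "F' \<in> extensional {..<Suc d}"
      using F F' unfolding one_factorizations_def by (auto simp: PiE_def)
    have e0: "F 0 = F' 0" using e unfolding \<Phi>_def by simp
    have eS: "\<And>i. i < d \<Longrightarrow> F (Suc i) = F' (Suc i)"
    proof -
      fix i assume i: "i < d"
      have "restrict (\<lambda>i. F (Suc i)) {..<d} = restrict (\<lambda>i. F' (Suc i)) {..<d}" using e unfolding \<Phi>_def by simp
      then have "restrict (\<lambda>i. F (Suc i)) {..<d} i = restrict (\<lambda>i. F' (Suc i)) {..<d} i" by simp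
      then show "F (Suc i) = F' (Suc i)" using i by simp
    qed
    show "F = F'"
    proof
      fix i show "F i = F' i"
      proof (cases i)
        case 0 then show ?thesis using e0 by simp
      next
        case (Suc j)
        show ?thesis
        proof (cases "j < d")
          case True then show ?thesis using eS Suc by simp
        next
          case False
          then have "i \<notin> {..<Suc d}" using Suc by simp
          then show ?thesis using x1 by (simp add: extensional_def)
        qed
      qed
    qed
  qed
  have "card (one_factorizations V E (Suc d)) \<le> card T"
    by (rule card_inj_on_le[OF inj _ fT]) (use into in auto)
  also have "card T = (\<Sum>M\<in>PM. card (one_factorizations V (E - M) d))"
    unfolding T_def by (rule card_SigmaI) (use fPM fE in \<open>auto intro: OF_finite\<close>)
  finally have c1: "real (card (one_factorizations V E (Suc d))) \<le> (\<Sum>M\<in>PM. real (card (one_factorizations V (E - M) d)))"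
    by (simp only: of_nat_le_iff of_nat_sum[symmetric])
  define P where "P = (\<Prod>k\<in>{1..d}. exp (real (card V) * ln (fact k) / (2 * real k)))"
  have "(\<Sum>M\<in>PM. real (card (one_factorizations V (E - M) d))) \<le> (\<Sum>M\<in>PM. P)"
  proof (rule sum_mono)
    fix M assume "M \<in> PM"
    then have pm: "perfect_matching V E M" unfolding PM_def by simp
    show "real (card (one_factorizations V (E - M) d)) \<le> P"
      unfolding P_def by (rule Suc.IH) (use remove_pm_regular[OF sg deg pm] in auto)
  qed
  also have "\<dots> = real (card PM) * P" by simp
  also have "\<dots> \<le> exp (real (card V) * ln (fact (Suc d)) / (2 * real (Suc d))) * P"
    by (rule mult_right_mono) (use pm_bound[OF sg deg] in \<open>simp_all add: PM_def P_def prod_nonneg\<close>)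
  also have "\<dots> = (\<Prod>k\<in>{1..Suc d}. exp (real (card V) * ln (fact k) / (2 * real k)))"
    unfolding P_def by (simp add: prod.nat_ivl_Suc' mult.commute)
  finally show ?case using c1 by linarith
qed

lemma lnstep: "(k::nat) \<ge> 1 \<Longrightarrow> 1 / (real k + 1) \<le> ln (real k + 1) - ln (real k)"
proof -
  assume k: "k \<ge> 1"
  have kp: "real k > 0" using k by simp
  have "ln (real k / (real k + 1)) \<le> real k / (real k + 1) - 1"
    by (rule ln_le_minus_one) (use kp in simp)
  also have "\<dots> = - (1 / (real k + 1))" using kp by (simp add: field_simps)
  finally have "ln (real k / (real k + 1)) \<le> - (1 / (real k + 1))" .
  moreover have "ln (real k / (real k + 1)) = ln (real k) - ln (real k + 1)" using kp by (simp add: ln_div)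
  ultimately show ?thesis by simp
qed

lemma lnfact: "(k::nat) \<ge> 1 \<Longrightarrow> ln (fact k) \<le> (real k + 1) * ln (real k) - real k + 1"
proof (induction k rule: dec_induct)
  case base then show ?case by simp
next
  case (step k)
  have kp: "real k > 0" using step.hyps by simp
  have fs: "(fact (Suc k) :: real) = (real k + 1) * fact k" by simp
  have "ln (fact (Suc k) :: real) = ln (real k + 1) + ln (fact k)"
    unfolding fs using kp by (simp add: ln_mult)
  also have "\<dots> \<le> ln (real k + 1) + ((real k + 1) * ln (real k) - real k + 1)" using step.IH by simp
  also have "\<dots> \<le> (real (Suc k) + 1) * ln (real (Suc k)) - real (Suc k) + 1"
  proof -
    have "1 \<le> (real k + 1) * (ln (real k + 1) - ln (real k))"
      using lnstep[OF step.hyps(1)] kp by (simp add: field_simps)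
    then show ?thesis by (simp add: algebra_simps)
  qed
  finally show ?case .
qed

lemma harm_bound: "(d::nat) \<ge> 1 \<Longrightarrow> (\<Sum>k=1..d. 1 / real k) \<le> 1 + ln (real d)"
proof (induction d rule: dec_induct)
  case base then show ?case by simp
next
  case (step d)
  have "(\<Sum>k=1..Suc d. 1 / real k) = (\<Sum>k=1..d. 1 / real k) + 1 / (real d + 1)"
    by (simp add: add.commute)
  also have "\<dots> \<le> 1 + ln (real d) + (ln (real d + 1) - ln (real d))"
    using step.IH lnstep[OF step.hyps(1)] by linarith
  finally show ?case by (simp add: add.commute)
qed

lemma sum_ln: "(\<Sum>k=1..d. ln (real k)) = ln (fact d)"
proof -
  have "ln (\<Prod>k=1..d. real k) = (\<Sum>k=1..d. ln (real k))" by (rule ln_prod) auto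
  then have "(\<Sum>k=1..d. ln (real k)) = ln (\<Prod>k=1..d. real k)" by simp
  also have "(\<Prod>k=1..d. real k) = fact d" by (simp add: fact_prod)
  finally show ?thesis .
qed

lemma main_sum:
  assumes d: "(d::nat) \<ge> 1"
  shows "(\<Sum>k=1..d. ln (fact k) / real k) \<le> real d * ln (real d) - 2 * real d + (ln (real d) + 1) * (ln (real d) + 2)"
proof -
  have "(\<Sum>k=1..d. ln (fact k) / real k) \<le> (\<Sum>k=1..d. ln (real k) - 1 + (ln (real d) + 1) * (1 / real k))"
  proof (rule sum_mono)
    fix k assume k: "k \<in> {1..d}"
    then have k1: "k \<ge> 1" and kd: "k \<le> d" by auto
    have kp: "real k > 0" using k1 by simp
    have lk: "ln (real k) \<le> ln (real d)" using kp kd by simp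
    have "ln (fact k) / real k \<le> ((real k + 1) * ln (real k) - real k + 1) / real k"
      by (rule divide_right_mono[OF lnfact[OF k1]]) simp
    also have "\<dots> = ln (real k) - 1 + (ln (real k) + 1) * (1 / real k)" using kp by (simp add: field_simps)
    also have "\<dots> \<le> ln (real k) - 1 + (ln (real d) + 1) * (1 / real k)"
      using lk kp by (simp add: divide_right_mono)
    finally show "ln (fact k) / real k \<le> ln (real k) - 1 + (ln (real d) + 1) * (1 / real k)" .
  qed
  also have "\<dots> = (\<Sum>k=1..d. ln (real k)) - real d + (ln (real d) + 1) * (\<Sum>k=1..d. 1 / real k)"
    by (simp add: sum.distrib sum_subtractf sum_distrib_left)
  also have "\<dots> = ln (fact d) - real d + (ln (real d) + 1) * (\<Sum>k=1..d. 1 / real k)"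
    unfolding sum_ln ..
  also have "\<dots> \<le> ((real d + 1) * ln (real d) - real d + 1) - real d + (ln (real d) + 1) * (1 + ln (real d))"
  proof -
    have l0: "0 \<le> ln (real d) + 1" using d by simp
    show ?thesis using lnfact[OF d] mult_left_mono[OF harm_bound[OF d] l0] by linarith
  qed
  also have "\<dots> = real d * ln (real d) - 2 * real d + (ln (real d) + 1) * (ln (real d) + 2)"
    by (simp add: algebra_simps)
  finally show ?thesis .
qed

lemma ev_bound: "eventually (\<lambda>x::real. (ln x + 1) * (ln x + 2) \<le> sqrt (x / 8)) at_top"
  by real_asymp

lemma ln1p: "0 \<le> (x::real) \<Longrightarrow> x \<le> 1 \<Longrightarrow> x / 2 \<le> ln (1 + x)"
proof -
  assume x: "0 \<le> x" "x \<le> 1"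
  have "ln (1 / (1 + x)) \<le> 1 / (1 + x) - 1" by (rule ln_le_minus_one) (use x in simp)
  then have "- ln (1 + x) \<le> - (x / (1 + x))" using x by (simp add: ln_div field_simps)
  moreover have "x / 2 \<le> x / (1 + x)" by (rule divide_left_mono) (use x in auto)
  ultimately show ?thesis by linarith
qed

theorem theorem10:
  shows "\<exists>n0::nat. \<forall>n::nat. \<forall>d::nat. \<forall>(V::nat set) (E::nat set set).
     even n \<and> n \<ge> n0 \<and> real d \<ge> real n / 2 \<and> card V = n \<and> regular_graph V E d \<longrightarrow>
     real (num_one_factorizations V E d)
       \<le> ((1 + real n powr (-1/2)) * real d / exp 2) ^ (d * n div 2)"
proof -
  obtain D :: real where D: "\<And>x. x \<ge> D \<Longrightarrow> (ln x + 1) * (ln x + 2) \<le> sqrt (x / 8)"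
    using ev_bound unfolding eventually_at_top_linorder by blast
  define n0 where "n0 = 2 * nat \<lceil>D\<rceil> + 2"
  show ?thesis
  proof (intro exI[of _ n0] allI impI)
    fix n d :: nat and V :: "nat set" and E :: "nat set set"
    assume a: "even n \<and> n0 \<le> n \<and> real n / 2 \<le> real d \<and> card V = n \<and> regular_graph V E d"
    then have ev: "even n" and nn0: "n0 \<le> n" and nd: "real n / 2 \<le> real d" and cV: "card V = n"
      and rg: "regular_graph V E d" by auto
    have sg: "simple_graph V E" and deg: "\<And>v. v \<in> V \<Longrightarrow> card {e\<in>E. v \<in> e} = d"
      using rg unfolding regular_graph_def by auto
    have n2: "real n \<ge> 2" using nn0 unfolding n0_def by simp
    have dD: "real d \<ge> D"
    proof -
      have "real n0 / 2 \<le> real n / 2" using nn0 by simp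
      moreover have "real n0 / 2 = real (nat \<lceil>D\<rceil>) + 1" unfolding n0_def by simp
      moreover have "D \<le> real (nat \<lceil>D\<rceil>)" by linarith
      ultimately show ?thesis using nd by linarith
    qed
    have d1: "d \<ge> 1" using nd n2 by simp
    have dpos: "real d > 0" using d1 by simp
    define x where "x = real n powr (-1/2)"
    have x_eq: "x = 1 / sqrt (real n)"
    proof -
      have h: "(-1/2::real) = -(1/2)" by simp
      have "real n powr (-1/2) = inverse (real n powr (1/2))" unfolding h by (rule powr_minus)
      also have "real n powr (1/2) = sqrt (real n)" by (simp add: powr_half_sqrt)
      finally have "real n powr (-1/2) = inverse (sqrt (real n))" .
      then show ?thesis unfolding x_def inverse_eq_divide .
    qed
    have sn: "sqrt (real n) \<ge> 1" using n2 by (simp add: real_sqrt_ge_one)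
    have x0: "0 \<le> x" and x1: "x \<le> 1" unfolding x_eq using sn by auto
    have x2: "x ^ 2 = 1 / real n" unfolding x_eq using n2 by (simp add: power_divide)
    have key: "(ln (real d) + 1) * (ln (real d) + 2) \<le> real d * ln (1 + x)"
    proof -
      have "(ln (real d) + 1) * (ln (real d) + 2) \<le> sqrt (real d / 8)" using D[OF dD] .
      also have "sqrt (real d / 8) \<le> real d * x / 2"
      proof -
        have "real d / 8 \<le> (real d * x / 2) ^ 2"
        proof -
          have "(real d * x / 2) ^ 2 = (real d) ^ 2 * x ^ 2 / 4"
            by (simp add: power_mult_distrib power_divide)
          also have "\<dots> = real d * real d / (4 * real n)" unfolding x2 by (simp add: power2_eq_square)
          finally have "(real d * x / 2) ^ 2 = real d * real d / (4 * real n)" .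
          moreover have "real d / 8 \<le> real d * real d / (4 * real n)"
            using nd n2 dpos by (simp add: field_simps)
          ultimately show ?thesis by simp
        qed
        then have "sqrt (real d / 8) \<le> sqrt ((real d * x / 2) ^ 2)" by (rule real_sqrt_le_mono)
        also have "\<dots> = real d * x / 2" using x0 dpos by simp
        finally show ?thesis .
      qed
      also have "real d * x / 2 \<le> real d * ln (1 + x)"
        using ln1p[OF x0 x1] dpos by (simp add: mult_left_mono)
      finally show ?thesis .
    qed
    have S: "(\<Sum>k=1..d. ln (fact k) / real k) \<le> real d * ln (real d) - 2 * real d + real d * ln (1 + x)"
      using main_sum[OF d1] key by linarith
    define b where "b = (1 + x) * real d / exp 2"
    have bpos: "b > 0" unfolding b_def using x0 dpos by simp
    have lnb: "ln b = ln (1 + x) + ln (real d) - 2"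
      unfolding b_def using x0 dpos by (simp add: ln_mult ln_div)
    obtain t where t: "n = 2 * t" using ev by blast
    have m: "real (d * n div 2) = real d * real n / 2" unfolding t by simp
    have "real (num_one_factorizations V E d) \<le> (\<Prod>k\<in>{1..d}. exp (real (card V) * ln (fact k) / (2 * real k)))"
      unfolding num_one_factorizations_def by (rule OF_bound[OF sg deg])
    also have "\<dots> = exp (\<Sum>k\<in>{1..d}. real n * ln (fact k) / (2 * real k))"
      by (simp add: exp_sum cV)
    also have "(\<Sum>k\<in>{1..d}. real n * ln (fact k) / (2 * real k)) = real n / 2 * (\<Sum>k=1..d. ln (fact k) / real k)"
      by (simp add: sum_distrib_left)
    also have "exp (real n / 2 * (\<Sum>k=1..d. ln (fact k) / real k)) \<le> exp (real n / 2 * (real d * ln (real d) - 2 * real d + real d * ln (1 + x)))"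
      using S n2 by (simp add: mult_left_mono)
    also have "real n / 2 * (real d * ln (real d) - 2 * real d + real d * ln (1 + x)) = real (d * n div 2) * ln b"
      unfolding m lnb by (simp add: algebra_simps)
    also have "exp (real (d * n div 2) * ln b) = b ^ (d * n div 2)"
      using bpos by (simp add: ln_realpow[symmetric])
    finally show "real (num_one_factorizations V E d) \<le> ((1 + real n powr (-1/2)) * real d / exp 2) ^ (d * n div 2)"
      unfolding b_def x_def .
  qed
qed

end
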